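(* Let $p$ be a prime, $m,t\ge 1$, $B=\mathrm{GF}(p^m)$ and $F=\mathrm{GF}(p^{mt})$, and assume that $t$ is divisible by $p$ (the characteristic of $F$). Let $n=|F|=|B|^t$, $k=n(1-1/|B|)$, and let $\mathcal{C}=\mathrm{RS}(F,k)=\{(f(\alpha))_{\alpha\in F} : f\in F[x],\ \deg f<k\}$, where the symbol $f(\alpha)$ is stored at the node indexed by $\alpha$. Then for any two distinct $\alpha^*,\overline{\alpha}\in F$, a repair center can recover both erased symbols $f(\alpha^* )$ and $f(\overline{\alpha})$ by downloading a total of $2(n-2)$ sub-symbols (elements of $B$), namely two sub-symbols from each surviving node $\alpha\in F\setminus\{\alpha^*,\overline{\alpha}\}$, each computed from the symbol $f(\alpha)$ stored at that node.
   Context: Elements of $F$ are called symbols and elements of $B$ sub-symbols. The trace is $\mathrm{Tr}_{F/B}(x)=\sum_{i=0}^{t-1}x^{|B|^i}$. In centralized repair, a single repair center downloads data from the surviving nodes and computes all erased symbols; the repair bandwidth is the total number of sub-symbols it downloads. *)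

theory Defs
  imports "HOL-Computational_Algebra.Polynomial" "HOL-Computational_Algebra.Primes" "HOL-Library.Cardinality"
begin

text \<open>The subfield GF(q) of a finite field F whose order is a power of q:
  it is the set of fixed points of the Frobenius-type map x \<mapsto> x^q.\<close>
definition subfield_of_order :: "nat \<Rightarrow> 'a::field set" where
  "subfield_of_order q = {x. x ^ q = x}"

text \<open>Centralized repair of the two erased nodes a1, a2 of the full-length
  Reed--Solomon code RS(F,k) (nodes indexed by all elements of F),
  downloading exactly two sub-symbols (elements of the subfield B) from each
  surviving node, each computed from the symbol stored at that node.
  q1 alpha, q2 alpha are the two download functions of node alpha; R is the
  repair center's reconstruction map, which only sees the downloaded data
  (the entries at the erased nodes are blanked to (0,0)).\<close>
definition two_erasure_repairable_2_per_node ::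
    "'a::field set \<Rightarrow> nat \<Rightarrow> 'a \<Rightarrow> 'a \<Rightarrow> bool" where
  "two_erasure_repairable_2_per_node B k a1 a2 \<longleftrightarrow>
     (\<exists>(q1 :: 'a \<Rightarrow> 'a \<Rightarrow> 'a) (q2 :: 'a \<Rightarrow> 'a \<Rightarrow> 'a)
        (R :: ('a \<Rightarrow> 'a \<times> 'a) \<Rightarrow> 'a \<times> 'a).
        (\<forall>\<alpha> x. q1 \<alpha> x \<in> B \<and> q2 \<alpha> x \<in> B) \<and>
        (\<forall>f :: 'a poly. degree f < k \<longrightarrow>
           R (\<lambda>\<alpha>. if \<alpha> \<noteq> a1 \<and> \<alpha> \<noteq> a2
                    then (q1 \<alpha> (poly f \<alpha>), q2 \<alpha> (poly f \<alpha>)) else (0, 0))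
             = (poly f a1, poly f a2)))"

end

theory Submission
  imports Defs "HOL-Number_Theory.Residues"
begin

lemma pow_card_same:
  fixes x :: "'a :: {field,finite}"
  shows   "x ^ CARD('a) = x"
proof (cases "x = 0")
  case False
  have "x * (\<Prod>y\<in>UNIV-{0}. x * y) = x * x ^ (card (UNIV :: 'a set) - 1) * \<Prod>(UNIV-{0})"
    by (simp add: prod.distrib mult_ac)
  also have "x * x ^ (card (UNIV :: 'a set) - 1) = x ^ Suc (card (UNIV :: 'a set) - 1)"
    by (subst power_Suc) auto
  also have "Suc (card (UNIV :: 'a set) - 1) = card (UNIV :: 'a set)"
    using finite_UNIV_card_ge_0[where ?'a = 'a] by simp
  also have "(\<Prod>y\<in>UNIV-{0}. x * y) = (\<Prod>y\<in>UNIV-{0}. y)"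
    by (rule prod.reindex_bij_witness[of _ "\<lambda>y. y / x" "\<lambda>y. x * y"]) (use False in auto)
  finally show ?thesis
    by simp
qed (use finite_UNIV_card_ge_0[where ?'a = 'a] in auto)

lemma char_eq:
  assumes "prime p" "m \<ge> 1" "t \<ge> 1" "CARD('a::{field,finite}) = p ^ (m * t)"
  shows "CHAR('a) = p"
proof -
  have "CHAR('a) > 0" by (rule finite_imp_CHAR_pos) simp
  hence pr: "prime CHAR('a)" by (rule prime_CHAR_semidom)
  have "CHAR('a) dvd p ^ (m*t)" using CHAR_dvd_CARD[where 'a='a] assms(4) by simp
  hence "CHAR('a) dvd p" using pr prime_dvd_power by blast
  thus ?thesis using pr assms(1) by (simp add: primes_dvd_imp_eq)
qed

definition tr :: "nat \<Rightarrow> nat \<Rightarrow> 'a::field \<Rightarrow> 'a" where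
  "tr Q t x = (\<Sum>i<t. x ^ (Q ^ i))"

lemma frob_sum:
  fixes f :: "'b \<Rightarrow> 'a::field"
  assumes "prime p" "CHAR('a) = p"
  shows "sum f A ^ ((p^m)^i) = (\<Sum>x\<in>A. f x ^ ((p^m)^i))"
  by (rule freshmans_dream_sum'[where n="m*i"]) (use assms in \<open>auto simp: power_mult\<close>)

lemma frob_add:
  fixes x y :: "'a::field"
  assumes "prime p" "CHAR('a) = p"
  shows "(x + y) ^ ((p^m)^i) = x ^ ((p^m)^i) + y ^ ((p^m)^i)"
  by (rule freshmans_dream'[where n="m*i"]) (use assms in \<open>auto simp: power_mult\<close>)

lemma tr_add:
  fixes x y :: "'a::field"
  assumes "prime p" "CHAR('a) = p"
  shows "tr (p^m) t (x + y) = tr (p^m) t x + tr (p^m) t y"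
  unfolding tr_def using frob_add[OF assms] by (simp add: sum.distrib)

lemma tr_sum:
  fixes f :: "'b \<Rightarrow> 'a::field"
  assumes "prime p" "CHAR('a) = p"
  shows "tr (p^m) t (sum f A) = (\<Sum>x\<in>A. tr (p^m) t (f x))"
  unfolding tr_def frob_sum[OF assms] by (rule sum.swap)

lemma tr_zero: "Q > 0 \<Longrightarrow> tr Q t (0::'a::field) = 0"
  unfolding tr_def by (intro sum.neutral) (simp add: power_0_left)

lemma tr_diff:
  fixes x y :: "'a::field"
  assumes "prime p" "CHAR('a) = p"
  shows "tr (p^m) t (x - y) = tr (p^m) t x - tr (p^m) t y"
  using tr_add[OF assms, of m t "x - y" y] by simp

lemma tr_neg:
  fixes x :: "'a::field"
  assumes "prime p" "CHAR('a) = p"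
  shows "tr (p^m) t (- x) = - tr (p^m) t x"
  using tr_diff[OF assms, of m t 0 x] assms(1) by (simp add: tr_zero prime_gt_0_nat)

lemma fixed_pow:
  fixes c :: "'a::field"
  assumes "c ^ Q = c" shows "c ^ (Q ^ i) = c"
proof (induction i)
  case (Suc i)
  have "c ^ (Q ^ Suc i) = (c ^ Q) ^ (Q ^ i)" by (simp add: power_mult[symmetric] mult.commute)
  thus ?case using assms Suc by simp
qed simp

lemma tr_smult:
  fixes c x :: "'a::field"
  assumes "c ^ Q = c"
  shows "tr Q t (c * x) = c * tr Q t x"
  unfolding tr_def by (simp add: power_mult_distrib fixed_pow[OF assms] sum_distrib_left)

lemma tr_fixed:
  fixes x :: "'a::{field,finite}"
  assumes "prime p" "CHAR('a) = p" "CARD('a) = (p^m)^t"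
  shows "tr (p^m) t x ^ (p^m) = tr (p^m) t x"
proof -
  have "tr (p^m) t x ^ (p^m) = (\<Sum>i<t. x ^ ((p^m)^Suc i))"
    unfolding tr_def using frob_sum[OF assms(1,2), of "\<lambda>i. x ^ ((p^m)^i)" "{..<t}" m 1]
    by (simp add: power_mult[symmetric] mult.commute)
  also have "\<dots> = (\<Sum>i<t. x ^ ((p^m)^i))"
  proof -
    have a: "(\<Sum>i<Suc t. x^((p^m)^i)) = x + (\<Sum>i<t. x^((p^m)^Suc i))"
      by (subst sum.lessThan_Suc_shift) simp
    have b: "(\<Sum>i<Suc t. x^((p^m)^i)) = (\<Sum>i<t. x^((p^m)^i)) + x"
      using pow_card_same[of x] assms(3) by simp
    from a b show ?thesis by (simp add: add.commute)
  qed
  finally show ?thesis unfolding tr_def .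
qed

lemma tr_one:
  assumes "prime p" "CHAR('a::field) = p" "p dvd t"
  shows "tr Q t (1::'a) = 0"
  unfolding tr_def using assms by (simp add: of_nat_eq_0_iff_char_dvd)


lemma tr_nondeg:
  fixes z :: "'a::{field,finite}"
  assumes "prime p" "m \<ge> 1" "t \<ge> 1" "CARD('a) = (p^m)^t" "z \<noteq> 0"
  shows "\<exists>u. tr (p^m) t (u * z) \<noteq> 0"
proof -
  define Q where "Q = p^m"
  have Q1: "Q > 1" unfolding Q_def using assms(2)
    by (intro one_less_power[OF prime_gt_1_nat[OF assms(1)]]) auto
  define P :: "'a poly" where "P = (\<Sum>i<t. Polynomial.monom 1 (Q^i))"
  have polyP: "poly P x = tr Q t x" for x unfolding P_def tr_def by (simp add: poly_sum poly_monom)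
  have "Polynomial.coeff P 1 = (\<Sum>i<t. if i = 0 then 1 else 0)" unfolding P_def coeff_sum coeff_monom
  proof (rule sum.cong)
    fix i assume "i \<in> {..<t}"
    have "Q ^ i = 1 \<longleftrightarrow> i = 0" using Q1 by simp
    thus "(if Q ^ i = 1 then 1 else 0) = (if i = 0 then 1 else (0::'a))" by simp
  qed simp
  also have "\<dots> = 1" using assms(3) by (simp add: sum.delta)
  finally have "P \<noteq> 0" by auto
  have "degree P \<le> Q^(t-1)"
  proof (rule degree_le, intro allI impI)
    fix j assume j: "Q^(t-1) < j"
    have "Q ^ i \<noteq> j" if "i < t" for i
    proof -
      have "Q ^ i \<le> Q^(t-1)" using that Q1 by (intro power_increasing) auto
      thus ?thesis using j by simp
    qed
    thus "Polynomial.coeff P j = 0" unfolding P_def coeff_sum coeff_monom by simp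
  qed
  also have "Q^(t-1) < Q^t" using Q1 assms(3) by simp
  finally have dl: "degree P < CARD('a)" using assms(4) Q_def by simp
  have "\<exists>w::'a. tr Q t w \<noteq> 0"
  proof (rule ccontr)
    assume "\<not> ?thesis"
    hence "{x. poly P x = 0} = UNIV" using polyP by auto
    hence "CARD('a) \<le> degree P" using card_poly_roots_bound[OF \<open>P \<noteq> 0\<close>] by simp
    thus False using dl by simp
  qed
  then obtain w :: 'a where "tr Q t w \<noteq> 0" by blast
  hence "tr Q t ((w / z) * z) \<noteq> 0" using assms(5) by simp
  thus ?thesis unfolding Q_def by blast
qed

lemma powsum_zero:
  assumes "j < CARD('a::{field,finite}) - 1"
  shows "(\<Sum>x\<in>UNIV. (x::'a)^j) = 0"
proof (cases "j = 0")
  case True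
  have "of_nat CARD('a) = (0::'a)"
    using CHAR_dvd_CARD[where 'a='a] by (simp add: of_nat_eq_0_iff_char_dvd)
  thus ?thesis using True by simp
next
  case False
  define P :: "'a poly" where "P = Polynomial.monom 1 j + [:-1:]"
  have "degree P = j" unfolding P_def using False
    by (subst degree_add_eq_left) (auto simp: degree_monom_eq)
  hence "P \<noteq> 0" using False by auto
  have "\<exists>c::'a. c \<noteq> 0 \<and> c ^ j \<noteq> 1"
  proof (rule ccontr)
    assume "\<not> ?thesis"
    hence "UNIV - {0} \<subseteq> {x. poly P x = 0}" unfolding P_def by (auto simp: poly_monom)
    hence "card (UNIV - {0::'a}) \<le> card {x. poly P x = 0}"
      by (intro card_mono) (auto intro: poly_roots_finite[OF \<open>P \<noteq> 0\<close>])
    also have "\<dots> \<le> j" using card_poly_roots_bound[OF \<open>P \<noteq> 0\<close>] \<open>degree P = j\<close> by simp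
    finally show False using assms by (simp add: card_Diff_singleton)
  qed
  then obtain c :: 'a where c: "c \<noteq> 0" "c ^ j \<noteq> 1" by blast
  define S where "S = (\<Sum>x\<in>UNIV. (x::'a)^j)"
  have "S = (\<Sum>x\<in>UNIV. (c * x)^j)" unfolding S_def
    by (rule sum.reindex_bij_witness[of _ "\<lambda>y. c * y" "\<lambda>y. y / c"]) (use c in auto)
  also have "\<dots> = c^j * S" unfolding S_def by (simp add: power_mult_distrib sum_distrib_left)
  finally have "(c^j - 1) * S = 0" by (simp add: algebra_simps)
  thus ?thesis using c(2) unfolding S_def by simp
qed

lemma polysum_zero:
  fixes h :: "'a::{field,finite} poly"
  assumes "degree h < CARD('a) - 1"
  shows "(\<Sum>x\<in>UNIV. poly h x) = 0"
proof -
  have "(\<Sum>x\<in>UNIV. poly h x) = (\<Sum>x\<in>UNIV. \<Sum>i\<le>degree h. Polynomial.coeff h i * x ^ i)"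
    by (simp add: poly_altdef)
  also have "\<dots> = (\<Sum>i\<le>degree h. Polynomial.coeff h i * (\<Sum>x\<in>UNIV. x ^ i))"
    by (subst sum.swap) (simp add: sum_distrib_left)
  also have "\<dots> = 0" using assms by (intro sum.neutral) (auto simp: powsum_zero)
  finally show ?thesis .
qed

lemma card_B_le:
  assumes "Q > 1"
  shows "card {x::'a::{field,finite}. x ^ Q = x} \<le> Q"
proof -
  define P :: "'a poly" where "P = Polynomial.monom 1 Q + [:0,-1:]"
  have "degree P = Q" unfolding P_def using assms
    by (subst degree_add_eq_left) (auto simp: degree_monom_eq)
  hence "P \<noteq> 0" using assms by auto
  have "{x::'a. x ^ Q = x} = {x. poly P x = 0}" unfolding P_def by (auto simp: poly_monom)
  thus ?thesis using card_poly_roots_bound[OF \<open>P \<noteq> 0\<close>] \<open>degree P = Q\<close> by simp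
qed


lemma dual_identity:
  fixes h :: "'a::{field,finite} poly" and a u :: 'a
  assumes "prime p" "m \<ge> 1" "t \<ge> 1" "CHAR('a) = p" "CARD('a) = (p^m)^t"
    and dh: "degree h < CARD('a) - (p^m)^(t-1)"
  shows "tr (p^m) t (u * poly h a) + (\<Sum>x\<in>UNIV-{a}. tr (p^m) t (u*(x-a)) * tr (p^m) t (poly h x/(x-a))) = 0"
proof -
  define Q where "Q = p^m"
  have Q1: "Q > 1" unfolding Q_def using assms(2)
    by (intro one_less_power[OF prime_gt_1_nat[OF assms(1)]]) auto
  define g :: "'a poly" where "g = (\<Sum>i<t. Polynomial.smult (u^(Q^i)) ([:-a,1:]^(Q^i - 1)))"
  have pg: "poly g x = (\<Sum>i<t. u^(Q^i) * (x-a)^(Q^i - 1))" for x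
    unfolding g_def by (simp add: poly_sum)
  have dg: "degree g \<le> Q^(t-1) - 1" unfolding g_def
  proof (rule degree_sum_le)
    fix i assume "i \<in> {..<t}"
    hence "Q^i \<le> Q^(t-1)" using Q1 by (intro power_increasing) auto
    hence "Q^i - 1 \<le> Q^(t-1) - 1" by simp
    thus "degree (Polynomial.smult (u^(Q^i)) ([:-a,1:]^(Q^i - 1))) \<le> Q^(t-1) - 1"
      using degree_smult_le[of "u^(Q^i)" "[:-a,1:]^(Q^i - 1)"] degree_linear_power[of "-a" "Q^i - 1"]
      by linarith
  qed simp
  have q1: "Q^(t-1) \<ge> 1" using Q1 by simp
  have q2: "Q^(t-1) \<le> CARD('a)"
  proof -
    have "Q^(t-1) \<le> Q^t" using Q1 by (intro power_increasing) auto
    thus ?thesis using assms(5) unfolding Q_def by simp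
  qed
  have "degree (h * g) \<le> degree h + degree g" by (rule degree_mult_le)
  also have "\<dots> < CARD('a) - 1" using dh dg q1 q2 unfolding Q_def by linarith
  finally have "(\<Sum>x\<in>UNIV. poly (h * g) x) = 0" by (rule polysum_zero)
  hence s0: "(\<Sum>x\<in>UNIV. poly h x * poly g x) = 0" by simp
  have ga: "poly g a = u"
  proof -
    have "poly g a = (\<Sum>i<t. if i = 0 then u else 0)" unfolding pg
    proof (rule sum.cong)
      fix i assume "i \<in> {..<t}"
      have "Q^i - 1 = 0 \<longleftrightarrow> i = 0" using Q1 by (simp add: le_Suc_eq)
      thus "u^(Q^i) * (a-a)^(Q^i - 1) = (if i = 0 then u else 0)" by (cases "i = 0") auto
    qed simp
    thus ?thesis using assms(3) by (simp add: sum.delta)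
  qed
  have gx: "poly g x = tr Q t (u*(x-a)) / (x-a)" if "x \<noteq> a" for x
  proof -
    have "tr Q t (u*(x-a)) = (\<Sum>i<t. (u^(Q^i) * (x-a)^(Q^i - 1)) * (x-a))"
      unfolding tr_def
    proof (rule sum.cong)
      fix i assume "i \<in> {..<t}"
      have "Q^i \<ge> 1" using Q1 by simp
      hence "(x-a)^(Q^i) = (x-a)^(Q^i - 1) * (x-a)"
      proof -
        have "Q^i = Suc (Q^i - 1)" using \<open>Q^i \<ge> 1\<close> by simp
        hence "(x-a)^(Q^i) = (x-a)^(Suc (Q^i - 1))" by (rule arg_cong)
        thus ?thesis by (simp only: power_Suc2)
      qed
      thus "(u*(x-a))^(Q^i) = (u^(Q^i) * (x-a)^(Q^i - 1)) * (x-a)"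
        by (simp add: power_mult_distrib mult.assoc)
    qed simp
    also have "\<dots> = poly g x * (x - a)" unfolding pg by (simp add: sum_distrib_right)
    finally show ?thesis using that by simp
  qed
  have "(\<Sum>x\<in>UNIV. poly h x * poly g x) = poly h a * poly g a + (\<Sum>x\<in>UNIV-{a}. poly h x * poly g x)"
    by (rule sum.remove) auto
  also have "(\<Sum>x\<in>UNIV-{a}. poly h x * poly g x) = (\<Sum>x\<in>UNIV-{a}. tr Q t (u*(x-a)) * (poly h x / (x-a)))"
  proof (rule sum.cong)
    fix x assume "x \<in> UNIV - {a}"
    hence "poly g x = tr Q t (u*(x-a)) / (x-a)" using gx by auto
    thus "poly h x * poly g x = tr Q t (u*(x-a)) * (poly h x / (x-a))" by simp
  qed simp
  finally have e1: "u * poly h a + (\<Sum>x\<in>UNIV-{a}. tr Q t (u*(x-a)) * (poly h x / (x-a))) = 0"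
    using s0 ga by (simp add: mult.commute)
  have "tr Q t (u * poly h a + (\<Sum>x\<in>UNIV-{a}. tr Q t (u*(x-a)) * (poly h x / (x-a)))) = 0"
    unfolding e1 using tr_zero[of Q t] Q1 by simp
  hence "tr Q t (u * poly h a) + (\<Sum>x\<in>UNIV-{a}. tr Q t (tr Q t (u*(x-a)) * (poly h x / (x-a)))) = 0"
    unfolding Q_def tr_add[OF assms(1,4)] tr_sum[OF assms(1,4)] .
  moreover have "tr Q t (tr Q t (u*(x-a)) * (poly h x / (x-a))) = tr Q t (u*(x-a)) * tr Q t (poly h x / (x-a))" for x
    by (rule tr_smult) (unfold Q_def, rule tr_fixed[OF assms(1,4,5)])
  ultimately show ?thesis unfolding Q_def by simp
qed


lemma key:
  fixes h :: "'a::{field,finite} poly" and a b :: 'a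
  assumes "prime p" "m \<ge> 1" "t \<ge> 1" "CHAR('a) = p" "CARD('a) = (p^m)^t" "p dvd t" "a \<noteq> b"
    and dh: "degree h < CARD('a) - (p^m)^(t-1)"
    and z: "\<And>x. x \<noteq> a \<Longrightarrow> x \<noteq> b \<Longrightarrow>
              tr (p^m) t (poly h x/(x-a)) = 0 \<and> tr (p^m) t (poly h x/(x-b)) = 0"
  shows "poly h a = 0"
proof -
  let ?T = "tr (p^m) t"
  have E: "?T (u * poly h c) + ?T (u*(d-c)) * ?T (poly h d/(d-c)) = 0"
    if cd: "(c = a \<and> d = b) \<or> (c = b \<and> d = a)" for u c d
  proof -
    have "c \<noteq> d" using cd assms(7) by auto
    have "(\<Sum>x\<in>UNIV-{c}. ?T (u*(x-c)) * ?T (poly h x/(x-c)))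
        = ?T (u*(d-c)) * ?T (poly h d/(d-c)) + (\<Sum>x\<in>UNIV-{c}-{d}. ?T (u*(x-c)) * ?T (poly h x/(x-c)))"
      by (rule sum.remove) (use \<open>c \<noteq> d\<close> in auto)
    also have "(\<Sum>x\<in>UNIV-{c}-{d}. ?T (u*(x-c)) * ?T (poly h x/(x-c))) = 0"
    proof (rule sum.neutral, intro ballI)
      fix x assume "x \<in> UNIV - {c} - {d}"
      hence "x \<noteq> a" "x \<noteq> b" using cd by auto
      hence "?T (poly h x/(x-c)) = 0" using z cd by auto
      thus "?T (u*(x-c)) * ?T (poly h x/(x-c)) = 0" by simp
    qed
    finally show ?thesis using dual_identity[OF assms(1-5) dh, of u c] by simp
  qed
  have "?T (poly h b / (a-b)) = 0"
    using E[of b a "1/(a-b)"] assms(7) tr_one[OF assms(1,4,6), of "p^m"] by simp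
  hence "?T (poly h b / (b-a)) = 0"
  proof -
    have "poly h b / (b-a) = - (poly h b / (a-b))"
      by (subst minus_diff_eq[symmetric, of b a]) (rule divide_minus_right)
    thus ?thesis using tr_neg[OF assms(1,4), of m t "poly h b / (a-b)"] \<open>?T (poly h b / (a-b)) = 0\<close>
      by simp
  qed
  hence "\<forall>u. ?T (u * poly h a) = 0" using E[of a b] by simp
  thus ?thesis using tr_nondeg[OF assms(1,2,3,5), of "poly h a"] by blast
qed

theorem theorem2:
  fixes p m t :: nat and a1 a2 :: "'a::{field,finite}"
  assumes "prime p" and "m \<ge> 1" and "t \<ge> 1"
    and "CARD('a) = p ^ (m * t)"
    and "p dvd t"
    and "a1 \<noteq> a2"
  shows "two_erasure_repairable_2_per_node (subfield_of_order (p ^ m) :: 'a set)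
           (CARD('a) - CARD('a) div card (subfield_of_order (p ^ m) :: 'a set)) a1 a2"
proof -
  define B where "B = (subfield_of_order (p ^ m) :: 'a set)"
  define k where "k = CARD('a) - CARD('a) div card B"
  have ch: "CHAR('a) = p" by (rule char_eq[OF assms(1-4)])
  have card: "CARD('a) = (p^m)^t" using assms(4) by (simp add: power_mult)
  have Q1: "p^m > 1" using assms(2)
    by (intro one_less_power[OF prime_gt_1_nat[OF assms(1)]]) auto
  have cB: "card B \<le> p^m" unfolding B_def subfield_of_order_def by (rule card_B_le[OF Q1])
  have "0 \<in> B" unfolding B_def subfield_of_order_def using Q1 prime_gt_0_nat[OF assms(1)] by simp
  hence cB0: "card B > 0" by (auto simp: card_gt_0_iff)
  have "CARD('a) div p^m \<le> CARD('a) div card B" by (rule div_le_mono2[OF cB0 cB])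
  moreover have "CARD('a) div p^m = (p^m)^(t-1)"
  proof -
    obtain t' where t': "t = Suc t'" using assms(3) by (cases t) auto
    show ?thesis unfolding card t' using Q1 prime_gt_0_nat[OF assms(1)] by simp
  qed
  ultimately have kle: "k \<le> CARD('a) - (p^m)^(t-1)" unfolding k_def by simp
  let ?T = "tr (p^m) t :: 'a \<Rightarrow> 'a"
  define q1 :: "'a \<Rightarrow> 'a \<Rightarrow> 'a" where "q1 = (\<lambda>\<alpha> x. ?T (x / (\<alpha> - a1)))"
  define q2 :: "'a \<Rightarrow> 'a \<Rightarrow> 'a" where "q2 = (\<lambda>\<alpha> x. ?T (x / (\<alpha> - a2)))"
  define dat :: "'a poly \<Rightarrow> 'a \<Rightarrow> 'a \<times> 'a" where "dat = (\<lambda>f \<alpha>. if \<alpha> \<noteq> a1 \<and> \<alpha> \<noteq> a2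
                    then (q1 \<alpha> (poly f \<alpha>), q2 \<alpha> (poly f \<alpha>)) else (0, 0))"
  define R :: "('a \<Rightarrow> 'a \<times> 'a) \<Rightarrow> 'a \<times> 'a" where
    "R = (\<lambda>D. let f = SOME f. degree f < k \<and> dat f = D in (poly f a1, poly f a2))"
  have inB: "q1 \<alpha> x \<in> B \<and> q2 \<alpha> x \<in> B" for \<alpha> x
    unfolding q1_def q2_def B_def subfield_of_order_def
    using tr_fixed[OF assms(1) ch card] by simp
  have rec: "R (dat f) = (poly f a1, poly f a2)" if df: "degree f < k" for f
  proof -
    define f' where "f' = (SOME f'. degree f' < k \<and> dat f' = dat f)"
    have "degree f' < k \<and> dat f' = dat f" unfolding f'_def by (rule someI[of _ f]) (use df in simp)
    hence df': "degree f' < k" and eq: "dat f' = dat f" by auto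
    define h where "h = f - f'"
    have dh: "degree h < CARD('a) - (p^m)^(t-1)"
      unfolding h_def using degree_diff_less[OF df df'] kle by linarith
    have z: "?T (poly h x/(x-a1)) = 0 \<and> ?T (poly h x/(x-a2)) = 0"
      if "x \<noteq> a1" "x \<noteq> a2" for x
    proof -
      have "dat f' x = dat f x" using eq by simp
      hence "?T (poly f' x/(x-a1)) = ?T (poly f x/(x-a1))" "?T (poly f' x/(x-a2)) = ?T (poly f x/(x-a2))"
        using that unfolding dat_def q1_def q2_def by auto
      thus ?thesis unfolding h_def
        by (simp add: diff_divide_distrib tr_diff[OF assms(1) ch])
    qed
    have "poly h a1 = 0"
      by (rule key[OF assms(1,2,3) ch card assms(5,6) dh]) (use z in auto)
    moreover have "poly h a2 = 0"
      by (rule key[OF assms(1,2,3) ch card assms(5) _ dh, of a2 a1]) (use z assms(6) in auto)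
    ultimately show ?thesis unfolding R_def f'_def[symmetric] h_def by (simp add: Let_def)
  qed
  show ?thesis
    unfolding two_erasure_repairable_2_per_node_def B_def[symmetric] k_def[symmetric]
    using inB rec unfolding dat_def by blast
qed

end
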